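(* Let $A$ (in $\mathcal H$) and $B$ (in $\mathcal K$) be closed densely defined operators with $A\dashv B$, with a (possibly unbounded) intertwining operator $T$. Then: (i) $\sigma_p(A)\subseteq\sigma_p(B)$; more precisely, if $\xi\in D(A)$ is an eigenvector of $A$ with eigenvalue $\lambda$, then $T\xi$ is an eigenvector of $B$ with eigenvalue $\lambda$, and for every $\lambda\in\sigma_p(A)$ one has $m_A(\lambda)\le m_B(\lambda)$, where $m_C(\lambda)$ denotes the multiplicity of $\lambda$ as an eigenvalue of $C$. (ii) If $TD(A)=D(B)$ and $T^{-1}$ is bounded, then $\sigma_p(A)=\sigma_p(B)$. (iii) If $T^{-1}$ is bounded and $TD(A)$ is a core for $B$, then $\sigma_p(B)\subseteq\sigma(A)$.
   Context: A closed, densely defined operator $T:\mathcal H\to\mathcal K$ is called an intertwining operator for $A$ and $B$ if: (io$_0$) $D(A)\subset D(T)$ and $D(TA)=D(A)$, i.e. $\xi\in D(A)$ implies $A\xi\in D(T)$; (io$_1$) $T$ maps $D(A)$ into $D(B)$; (io$_2$) $BT\xi=TA\xi$ for all $\xi\in D(A)$. We write $A\dashv B$ ($A$ is quasi-similar to $B$) if there exists an intertwining operator $T$ for $A$ and $B$ which is injective and whose inverse $T^{-1}$ (defined on the range of $T$) is densely defined. $\sigma_p$ denotes the point spectrum (set of eigenvalues), $\sigma$ the spectrum. "$T^{-1}$ bounded" means bounded on its domain, the range of $T$. *)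

theory Defs
  imports "HOL-Analysis.Analysis" "HOL-Library.Extended_Nat"
begin

text \<open>HOL has no complex vector spaces; we introduce complex normed spaces and
complex inner product spaces as type classes (Hilbert space = complex_inner + complete_space).\<close>
class complex_normed_vector = real_normed_vector +
  fixes scaleC :: "complex \<Rightarrow> 'a \<Rightarrow> 'a" (infixr \<open>*\<^sub>C\<close> 75)
  assumes scaleC_add_right: "a *\<^sub>C (x + y) = a *\<^sub>C x + a *\<^sub>C y"
    and scaleC_add_left: "(a + b) *\<^sub>C x = a *\<^sub>C x + b *\<^sub>C x"
    and scaleC_scaleC: "a *\<^sub>C (b *\<^sub>C x) = (a * b) *\<^sub>C x"
    and scaleC_one: "1 *\<^sub>C x = x"
    and scaleC_of_real: "complex_of_real r *\<^sub>C x = r *\<^sub>R x"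
    and norm_scaleC: "norm (a *\<^sub>C x) = cmod a * norm x"

class complex_inner = complex_normed_vector +
  fixes cinner :: "'a \<Rightarrow> 'a \<Rightarrow> complex"
  assumes cinner_commute: "cinner x y = cnj (cinner y x)"
    and cinner_add_left: "cinner (x + y) z = cinner x z + cinner y z"
    and cinner_scaleC_left: "cinner (a *\<^sub>C x) y = cnj a * cinner x y"
    and norm_eq_sqrt_cinner: "cinner x x = complex_of_real ((norm x)\<^sup>2)"

type_synonym ('a, 'b) linop = "'a set \<times> ('a \<Rightarrow> 'b)"

definition dom :: "('a, 'b) linop \<Rightarrow> 'a set" where "dom T = fst T"
definition app :: "('a, 'b) linop \<Rightarrow> 'a \<Rightarrow> 'b" where "app T = snd T"

definition is_linop :: "('a::complex_normed_vector, 'b::complex_normed_vector) linop \<Rightarrow> bool" where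
  "is_linop T \<longleftrightarrow> 0 \<in> dom T
     \<and> (\<forall>x\<in>dom T. \<forall>y\<in>dom T. x + y \<in> dom T \<and> app T (x + y) = app T x + app T y)
     \<and> (\<forall>c::complex. \<forall>x\<in>dom T. c *\<^sub>C x \<in> dom T \<and> app T (c *\<^sub>C x) = c *\<^sub>C app T x)"

definition graph :: "('a, 'b) linop \<Rightarrow> ('a \<times> 'b) set" where
  "graph T = {(x, app T x) | x. x \<in> dom T}"

definition closed_op :: "('a::complex_normed_vector, 'b::complex_normed_vector) linop \<Rightarrow> bool" where
  "closed_op T \<longleftrightarrow> is_linop T \<and> closed (graph T)"

definition densely_defined :: "('a::complex_normed_vector, 'b) linop \<Rightarrow> bool" where
  "densely_defined T \<longleftrightarrow> closure (dom T) = UNIV"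

definition intertwining ::
  "('a::complex_normed_vector, 'b::complex_normed_vector) linop \<Rightarrow> ('a, 'a) linop \<Rightarrow> ('b, 'b) linop \<Rightarrow> bool" where
  "intertwining T A B \<longleftrightarrow> closed_op T \<and> densely_defined T
     \<and> dom A \<subseteq> dom T \<and> (\<forall>\<xi>\<in>dom A. app A \<xi> \<in> dom T)
     \<and> (\<forall>\<xi>\<in>dom A. app T \<xi> \<in> dom B)
     \<and> (\<forall>\<xi>\<in>dom A. app B (app T \<xi>) = app T (app A \<xi>))"

text \<open>T injective with densely defined inverse (inverse defined on the range of T).\<close>
definition inj_dense_inverse :: "('a::complex_normed_vector, 'b::complex_normed_vector) linop \<Rightarrow> bool" where
  "inj_dense_inverse T \<longleftrightarrow> inj_on (app T) (dom T) \<and> closure (app T ` dom T) = UNIV"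

definition quasi_similar :: "('a::complex_normed_vector, 'a) linop \<Rightarrow> ('b::complex_normed_vector, 'b) linop \<Rightarrow> bool" where
  "quasi_similar A B \<longleftrightarrow> (\<exists>T. intertwining T A B \<and> inj_dense_inverse T)"

definition inverse_bounded :: "('a::complex_normed_vector, 'b::complex_normed_vector) linop \<Rightarrow> bool" where
  "inverse_bounded T \<longleftrightarrow> (\<exists>C. \<forall>\<xi>\<in>dom T. norm \<xi> \<le> C * norm (app T \<xi>))"

definition eigenvector :: "('a::complex_normed_vector, 'a) linop \<Rightarrow> complex \<Rightarrow> 'a \<Rightarrow> bool" where
  "eigenvector A \<mu> \<xi> \<longleftrightarrow> \<xi> \<in> dom A \<and> \<xi> \<noteq> 0 \<and> app A \<xi> = \<mu> *\<^sub>C \<xi>"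

definition point_spectrum :: "('a::complex_normed_vector, 'a) linop \<Rightarrow> complex set" where
  "point_spectrum A = {\<mu>. \<exists>\<xi>. eigenvector A \<mu> \<xi>}"

definition eigenspace :: "('a::complex_normed_vector, 'a) linop \<Rightarrow> complex \<Rightarrow> 'a set" where
  "eigenspace A \<mu> = {\<xi> \<in> dom A. app A \<xi> = \<mu> *\<^sub>C \<xi>}"

definition c_independent :: "'a::complex_normed_vector set \<Rightarrow> bool" where
  "c_independent S \<longleftrightarrow> (\<forall>u. (\<Sum>v\<in>S. u v *\<^sub>C v) = 0 \<longrightarrow> (\<forall>v\<in>S. u v = 0))"

text \<open>Multiplicity = (complex) dimension of the eigenspace, \<infinity> if infinite-dimensional.\<close>
definition multiplicity :: "('a::complex_normed_vector, 'a) linop \<Rightarrow> complex \<Rightarrow> enat" where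
  "multiplicity A \<mu> =
     (SUP S \<in> {S. finite S \<and> S \<subseteq> eigenspace A \<mu> \<and> c_independent S}. enat (card S))"

definition resolvent_set :: "('a::complex_normed_vector, 'a) linop \<Rightarrow> complex set" where
  "resolvent_set A = {\<mu>. bij_betw (\<lambda>x. app A x - \<mu> *\<^sub>C x) (dom A) UNIV
      \<and> (\<exists>C. \<forall>x\<in>dom A. norm x \<le> C * norm (app A x - \<mu> *\<^sub>C x))}"

definition spectrum :: "('a::complex_normed_vector, 'a) linop \<Rightarrow> complex set" where
  "spectrum A = - resolvent_set A"

definition is_core :: "'b set \<Rightarrow> ('b::complex_normed_vector, 'b) linop \<Rightarrow> bool" where
  "is_core D B \<longleftrightarrow> D \<subseteq> dom B \<and> graph B \<subseteq> closure {(x, app B x) | x. x \<in> D}"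

end

theory Submission
  imports Defs
begin

lemma scaleC_zero_left[simp]: "(0::complex) *\<^sub>C (x::'a::complex_normed_vector) = 0"
  using scaleC_of_real[of 0 x] by simp

lemma scaleC_zero_right[simp]: "a *\<^sub>C (0::'a::complex_normed_vector) = 0"
  using norm_scaleC[of a "0::'a"] by simp

lemma scaleC_minus_right: "a *\<^sub>C (- x::'a::complex_normed_vector) = - (a *\<^sub>C x)"
  using scaleC_add_right[of a x "-x"] by (metis scaleC_zero_right add.right_inverse neg_eq_iff_add_eq_0)

lemma scaleC_diff_right: "a *\<^sub>C (x - y::'a::complex_normed_vector) = a *\<^sub>C x - a *\<^sub>C y"
  using scaleC_add_right[of a x "-y"] by (simp add: scaleC_minus_right)

lemma scaleC_minus_one: "(-1::complex) *\<^sub>C (x::'a::complex_normed_vector) = - x"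
  using scaleC_of_real[of "-1" x] by simp

lemma bl_scaleC: "bounded_linear (\<lambda>x::'a::complex_normed_vector. a *\<^sub>C x)"
proof (rule bounded_linear_intro[where K="cmod a"])
  fix x y :: 'a show "a *\<^sub>C (x + y) = a *\<^sub>C x + a *\<^sub>C y" by (rule scaleC_add_right)
next
  fix r and x :: 'a
  have "a *\<^sub>C (r *\<^sub>R x) = a *\<^sub>C (complex_of_real r *\<^sub>C x)" by (simp add: scaleC_of_real)
  also have "\<dots> = (complex_of_real r * a) *\<^sub>C x" by (simp add: scaleC_scaleC mult.commute)
  also have "\<dots> = complex_of_real r *\<^sub>C (a *\<^sub>C x)" by (simp add: scaleC_scaleC)
  also have "\<dots> = r *\<^sub>R (a *\<^sub>C x)" by (simp add: scaleC_of_real)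
  finally show "a *\<^sub>C (r *\<^sub>R x) = r *\<^sub>R (a *\<^sub>C x)" .
next
  fix x :: 'a show "norm (a *\<^sub>C x) \<le> norm x * cmod a" by (simp add: norm_scaleC mult.commute)
qed

lemma linop_add: "is_linop T \<Longrightarrow> x \<in> dom T \<Longrightarrow> y \<in> dom T \<Longrightarrow> x + y \<in> dom T \<and> app T (x + y) = app T x + app T y"
  unfolding is_linop_def by blast

lemma linop_scale: "is_linop T \<Longrightarrow> x \<in> dom T \<Longrightarrow> c *\<^sub>C x \<in> dom T \<and> app T (c *\<^sub>C x) = c *\<^sub>C app T x"
  unfolding is_linop_def by blast

lemma linop_zero: "is_linop T \<Longrightarrow> app T 0 = 0"
  using linop_scale[of T 0 0] unfolding is_linop_def by auto

lemma linop_diff: "is_linop T \<Longrightarrow> x \<in> dom T \<Longrightarrow> y \<in> dom T \<Longrightarrow> x - y \<in> dom T \<and> app T (x - y) = app T x - app T y"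
  using linop_add[of T x "(-1) *\<^sub>C y"] linop_scale[of T y "-1"]
  by (simp add: scaleC_minus_one)

lemma linop_sum: assumes TL: "is_linop T" shows "finite S \<Longrightarrow> S \<subseteq> dom T \<Longrightarrow>
   (\<Sum>v\<in>S. u v *\<^sub>C v) \<in> dom T \<and> app T (\<Sum>v\<in>S. u v *\<^sub>C v) = (\<Sum>v\<in>S. u v *\<^sub>C app T v)"
proof (induction S rule: finite_induct)
  case empty then show ?case using TL by (simp add: linop_zero, simp add: is_linop_def)
next
  case (insert x F)
  then have x: "x \<in> dom T" and F: "F \<subseteq> dom T" by auto
  from insert.IH[OF F] have ih: "(\<Sum>v\<in>F. u v *\<^sub>C v) \<in> dom T"
    "app T (\<Sum>v\<in>F. u v *\<^sub>C v) = (\<Sum>v\<in>F. u v *\<^sub>C app T v)" by auto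
  have s: "u x *\<^sub>C x \<in> dom T" "app T (u x *\<^sub>C x) = u x *\<^sub>C app T x"
    using linop_scale[OF TL x] by auto
  show ?case using insert.hyps linop_add[OF TL s(1) ih(1)] s ih by simp
qed

theorem proposition2p9:
  fixes A :: "('a::{complex_inner,complete_space}, 'a) linop"
    and B :: "('b::{complex_inner,complete_space}, 'b) linop"
    and T :: "('a, 'b) linop"
  assumes A_cl: "closed_op A" and A_dd: "densely_defined A"
    and B_cl: "closed_op B" and B_dd: "densely_defined B"
    and T_int: "intertwining T A B" and T_inv: "inj_dense_inverse T"
  shows "point_spectrum A \<subseteq> point_spectrum B
      \<and> (\<forall>\<xi> \<mu>. eigenvector A \<mu> \<xi> \<longrightarrow> eigenvector B \<mu> (app T \<xi>))
      \<and> (\<forall>\<mu>\<in>point_spectrum A. multiplicity A \<mu> \<le> multiplicity B \<mu>)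
      \<and> (app T ` dom A = dom B \<and> inverse_bounded T \<longrightarrow> point_spectrum A = point_spectrum B)
      \<and> (inverse_bounded T \<and> is_core (app T ` dom A) B \<longrightarrow> point_spectrum B \<subseteq> spectrum A)"
proof -
  have TL: "is_linop T" and Tcl: "closed (graph T)" using T_int
    unfolding intertwining_def closed_op_def by auto
  have domAT: "dom A \<subseteq> dom T" and AT: "\<And>\<xi>. \<xi> \<in> dom A \<Longrightarrow> app A \<xi> \<in> dom T"
    and TB: "\<And>\<xi>. \<xi> \<in> dom A \<Longrightarrow> app T \<xi> \<in> dom B"
    and BT: "\<And>\<xi>. \<xi> \<in> dom A \<Longrightarrow> app B (app T \<xi>) = app T (app A \<xi>)"
    using T_int unfolding intertwining_def by auto
  have Tinj: "inj_on (app T) (dom T)" using T_inv unfolding inj_dense_inverse_def by auto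
  have T0: "app T 0 = 0" by (rule linop_zero[OF TL])
  have zT: "0 \<in> dom T" using TL unfolding is_linop_def by auto
  have eigsp: "app T \<xi> \<in> eigenspace B \<mu>" if "\<xi> \<in> eigenspace A \<mu>" for \<xi> \<mu>
  proof -
    have x: "\<xi> \<in> dom A" "app A \<xi> = \<mu> *\<^sub>C \<xi>" using that unfolding eigenspace_def by auto
    have "app B (app T \<xi>) = app T (\<mu> *\<^sub>C \<xi>)" using BT[OF x(1)] x(2) by simp
    also have "\<dots> = \<mu> *\<^sub>C app T \<xi>" using linop_scale[OF TL] domAT x(1) by blast
    finally show ?thesis using TB[OF x(1)] unfolding eigenspace_def by auto
  qed
  have ev: "eigenvector B \<mu> (app T \<xi>)" if "eigenvector A \<mu> \<xi>" for \<xi> \<mu>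
  proof -
    have x: "\<xi> \<in> dom A" "\<xi> \<noteq> 0" "\<xi> \<in> eigenspace A \<mu>"
      using that unfolding eigenvector_def eigenspace_def by auto
    have "app T \<xi> \<noteq> 0" using Tinj x(1,2) domAT zT T0 by (metis inj_on_def subsetD)
    then show ?thesis using eigsp[OF x(3)] unfolding eigenvector_def eigenspace_def by auto
  qed
  have P1: "point_spectrum A \<subseteq> point_spectrum B"
    using ev unfolding point_spectrum_def by blast
  have P3: "multiplicity A \<mu> \<le> multiplicity B \<mu>" for \<mu>
    unfolding multiplicity_def
  proof (rule SUP_mono)
    fix S assume "S \<in> {S. finite S \<and> S \<subseteq> eigenspace A \<mu> \<and> c_independent S}"
    then have S: "finite S" "S \<subseteq> eigenspace A \<mu>" "c_independent S" by auto
    have SA: "S \<subseteq> dom T" using S(2) domAT unfolding eigenspace_def by auto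
    have inj: "inj_on (app T) S" using inj_on_subset[OF Tinj SA] .
    have "c_independent (app T ` S)"
      unfolding c_independent_def
    proof (intro allI impI)
      fix u assume u: "(\<Sum>v\<in>app T ` S. u v *\<^sub>C v) = 0"
      have "(\<Sum>v\<in>app T ` S. u v *\<^sub>C v) = (\<Sum>v\<in>S. u (app T v) *\<^sub>C app T v)"
        using sum.reindex[OF inj] by simp
      also have "\<dots> = app T (\<Sum>v\<in>S. u (app T v) *\<^sub>C v)"
        using linop_sum[OF TL S(1) SA, of "\<lambda>v. u (app T v)"] by simp
      finally have "app T (\<Sum>v\<in>S. u (app T v) *\<^sub>C v) = app T 0" using u T0 by simp
      moreover have "(\<Sum>v\<in>S. u (app T v) *\<^sub>C v) \<in> dom T"
        using linop_sum[OF TL S(1) SA] by simp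
      ultimately have "(\<Sum>v\<in>S. u (app T v) *\<^sub>C v) = 0"
        using Tinj zT by (meson inj_onD)
      then have "\<forall>v\<in>S. u (app T v) = 0"
        using S(3)[unfolded c_independent_def, rule_format, of "\<lambda>v. u (app T v)"] by blast
      then show "\<forall>v\<in>app T ` S. u v = 0" by blast
    qed
    moreover have "app T ` S \<subseteq> eigenspace B \<mu>" using eigsp S(2) by blast
    moreover have "card (app T ` S) = card S" using card_image[OF inj] .
    ultimately show "\<exists>S'\<in>{S. finite S \<and> S \<subseteq> eigenspace B \<mu> \<and> c_independent S}. enat (card S) \<le> enat (card S')"
      using S(1) by (intro bexI[of _ "app T ` S"]) auto
  qed
  have P4: "point_spectrum A = point_spectrum B" if h: "app T ` dom A = dom B"
  proof
    show "point_spectrum B \<subseteq> point_spectrum A"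
    proof
      fix \<mu> assume "\<mu> \<in> point_spectrum B"
      then obtain \<eta> where e: "\<eta> \<in> dom B" "\<eta> \<noteq> 0" "app B \<eta> = \<mu> *\<^sub>C \<eta>"
        unfolding point_spectrum_def eigenvector_def by auto
      then obtain \<xi> where x: "\<xi> \<in> dom A" "\<eta> = app T \<xi>" using h by blast
      have xT: "\<xi> \<in> dom T" using x domAT by auto
      have "app T (app A \<xi>) = app T (\<mu> *\<^sub>C \<xi>)"
        using BT[OF x(1)] e(3) x(2) linop_scale[OF TL xT] by simp
      then have "app A \<xi> = \<mu> *\<^sub>C \<xi>"
        using Tinj AT[OF x(1)] linop_scale[OF TL xT] by (meson inj_onD)
      moreover have "\<xi> \<noteq> 0" using e(2) x(2) T0 by auto
      ultimately show "\<mu> \<in> point_spectrum A"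
        using x(1) unfolding point_spectrum_def eigenvector_def by auto
    qed
  qed (rule P1)
  have P5: "point_spectrum B \<subseteq> spectrum A"
    if ib: "inverse_bounded T" and core: "is_core (app T ` dom A) B"
  proof
    fix \<mu> assume "\<mu> \<in> point_spectrum B"
    then obtain \<eta> where e: "\<eta> \<in> dom B" "\<eta> \<noteq> 0" "app B \<eta> = \<mu> *\<^sub>C \<eta>"
      unfolding point_spectrum_def eigenvector_def by auto
    show "\<mu> \<in> spectrum A"
    proof (rule ccontr)
      assume "\<mu> \<notin> spectrum A"
      then obtain C' where C': "\<And>x. x \<in> dom A \<Longrightarrow> norm x \<le> C' * norm (app A x - \<mu> *\<^sub>C x)"
        unfolding spectrum_def resolvent_set_def by auto
      obtain C where C: "\<And>x. x \<in> dom T \<Longrightarrow> norm x \<le> C * norm (app T x)"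
        using ib unfolding inverse_bounded_def by auto
      have "(\<eta>, app B \<eta>) \<in> closure {(x, app B x) | x. x \<in> app T ` dom A}"
        using core e(1) unfolding is_core_def graph_def by auto
      then obtain s where s: "\<And>n. s n \<in> {(x, app B x) | x. x \<in> app T ` dom A}"
        and sl: "s \<longlonglongrightarrow> (\<eta>, app B \<eta>)"
        unfolding closure_sequential by blast
      have "\<forall>n. \<exists>\<xi>. \<xi> \<in> dom A \<and> s n = (app T \<xi>, app B (app T \<xi>))" using s by blast
      then obtain \<xi> where xi: "\<And>n. \<xi> n \<in> dom A"
        and sx: "\<And>n. s n = (app T (\<xi> n), app B (app T (\<xi> n)))" by metis
      have l1: "(\<lambda>n. app T (\<xi> n)) \<longlonglongrightarrow> \<eta>"
        using tendsto_fst[OF sl] sx by simp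
      have l2: "(\<lambda>n. app B (app T (\<xi> n))) \<longlonglongrightarrow> \<mu> *\<^sub>C \<eta>"
        using tendsto_snd[OF sl] sx e(3) by simp
      have l3: "(\<lambda>n. \<mu> *\<^sub>C app T (\<xi> n)) \<longlonglongrightarrow> \<mu> *\<^sub>C \<eta>"
        using bounded_linear.tendsto[OF bl_scaleC l1] .
      define y where "y n = app A (\<xi> n) - \<mu> *\<^sub>C \<xi> n" for n
      have yT: "y n \<in> dom T \<and> app T (y n) = app B (app T (\<xi> n)) - \<mu> *\<^sub>C app T (\<xi> n)" for n
      proof -
        have xT: "\<xi> n \<in> dom T" using xi domAT by auto
        show ?thesis using linop_diff[OF TL AT[OF xi] linop_scale[OF TL xT, THEN conjunct1]]
            linop_scale[OF TL xT] BT[OF xi] unfolding y_def by simp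
      qed
      have "(\<lambda>n. app T (y n)) \<longlonglongrightarrow> \<mu> *\<^sub>C \<eta> - \<mu> *\<^sub>C \<eta>"
        using tendsto_diff[OF l2 l3] yT by simp
      then have lT: "(\<lambda>n. app T (y n)) \<longlonglongrightarrow> 0" by simp
      have ly: "y \<longlonglongrightarrow> 0"
      proof (rule Lim_null_comparison)
        show "\<forall>\<^sub>F n in sequentially. norm (y n) \<le> \<bar>C\<bar> * norm (app T (y n))"
          using C yT by (smt (verit) always_eventually mult_right_mono norm_ge_zero)
        show "(\<lambda>n. \<bar>C\<bar> * norm (app T (y n))) \<longlonglongrightarrow> 0"
          using tendsto_mult_right_zero[OF tendsto_norm_zero[OF lT]] by simp
      qed
      have lx: "\<xi> \<longlonglongrightarrow> 0"
      proof (rule Lim_null_comparison)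
        show "\<forall>\<^sub>F n in sequentially. norm (\<xi> n) \<le> \<bar>C'\<bar> * norm (y n)"
          using C' xi unfolding y_def by (smt (verit) always_eventually mult_right_mono norm_ge_zero)
        show "(\<lambda>n. \<bar>C'\<bar> * norm (y n)) \<longlonglongrightarrow> 0"
          using tendsto_mult_right_zero[OF tendsto_norm_zero[OF ly]] by simp
      qed
      have "(0, \<eta>) \<in> graph T"
      proof (rule closed_sequentially[OF Tcl])
        show "(\<xi> n, app T (\<xi> n)) \<in> graph T" for n
          using xi domAT unfolding graph_def by auto
        show "(\<lambda>n. (\<xi> n, app T (\<xi> n))) \<longlonglongrightarrow> (0, \<eta>)"
          using tendsto_Pair[OF lx l1] .
      qed
      then have "\<eta> = app T 0" unfolding graph_def by auto
      then show False using e(2) T0 by simp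
    qed
  qed
  show ?thesis using P1 ev P3 P4 P5 by blast
qed

end
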